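(* Consider the Bayesian stochastic multi-armed bandit setting described in the context, with finite arm set $\mathcal{A}=\{1,\dots,K\}$ and rewards in $[0,1]$. Let $\equiv$ be an equivalence relation on $\mathcal{A}$, and write $[a]$ for the equivalence class of $a$. Suppose that for every $t$ and every arm $a$, $Y_{t,a}=(a,Z_{t,[a]})$ for random variables $Z_{t,[a]}:\Omega\to\mathcal{Z}$ (one for each equivalence class), so that playing arm $a$ at time $t$ reveals $Z_{t,[a]}$ and hence the outcomes of all arms in the class of $a$. Then, for the Thompson sampling policy, the information ratio satisfies $\Gamma_t\le \frac{1}{2}\,|\mathcal{A}/\!\equiv|$ for every $t$, i.e. at most half the number of equivalence classes.
   Context: Bayesian setting: an unknown parameter $\theta$ is drawn from a prior; given $\theta$, the outcome vectors $Y_t=(Y_{t,a})_{a\in\mathcal{A}}$, $t=1,2,\dots$, are i.i.d. with a distribution $P_\theta$, taking values in a set $\mathcal{Y}$, and the reward of arm $a$ at time $t$ is $R(Y_{t,a})$ for a fixed function $R:\mathcal{Y}\to[0,1]$. The optimal arm is $A^*=\arg\max_{a}\mathbb{E}[R(Y_{t,a})\mid\theta]$. At round $t$ the agent plays $A_t$ and observes $Y_{t,A_t}$; the history $h_t$ consists of the previous arms and observations. Write $\mathbb{E}_t[\cdot]=\mathbb{E}[\cdot\mid h_t]$, $\mathbb{P}_t(\cdot)=\mathbb{P}(\cdot\mid h_t)$, and $I_t$ for mutual information conditioned on $h_t$. Thompson sampling selects $A_t$ so that $\mathbb{P}_t(A_t=a)=\mathbb{P}_t(A^*=a)$ for all $a$,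 with $A_t$ conditionally independent of $(\theta, Y_t)$ given $h_t$. The information ratio is $\Gamma_t=\dfrac{\big(\mathbb{E}_t[R(Y_{t,A^*})-R(Y_{t,A_t})]\big)^2}{I_t\big(A^*;(A_t,Y_{t,A_t})\big)}$. *)

theory Defs
  imports "HOL-Probability.Probability"
begin

text \<open>Single round t of the Bayesian bandit, viewed under the posterior given the
  history h_t: the probability space M is the conditional law given h_t.\<close>

definition class_outcome :: "('a \<times> 'a) set \<Rightarrow> ('a set \<Rightarrow> 'o \<Rightarrow> 'z) \<Rightarrow> 'a \<Rightarrow> 'o \<Rightarrow> 'a \<times> 'z" where
  "class_outcome E Z a \<omega> = (a, Z (E `` {a}) \<omega>)"

definition info_ratio ::
  "'o measure \<Rightarrow> 'y measure \<Rightarrow> ('y \<Rightarrow> real) \<Rightarrow> ('a \<Rightarrow> 'o \<Rightarrow> 'y)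
   \<Rightarrow> ('o \<Rightarrow> 'a) \<Rightarrow> ('o \<Rightarrow> 'a) \<Rightarrow> real" where
  "info_ratio M Ysp R Y Astar At =
     (prob_space.expectation M (\<lambda>\<omega>. R (Y (Astar \<omega>) \<omega>) - R (Y (At \<omega>) \<omega>)))\<^sup>2 /
     prob_space.mutual_information M (exp 1) (count_space UNIV) (count_space UNIV \<Otimes>\<^sub>M Ysp)
        Astar (\<lambda>\<omega>. (At \<omega>, Y (At \<omega>) \<omega>))"

end

theory Submission
  imports Defs
begin


lemma DV_bound:
  fixes Q P :: "'b measure" and g :: "'b \<Rightarrow> real"
  assumes Qp: "prob_space Q" and Pp: "prob_space P"
    and ac: "absolutely_continuous Q P" and sets_eq: "sets P = sets Q"
    and gm: "g \<in> borel_measurable Q" and gb: "\<And>x. \<bar>g x\<bar> \<le> B"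
    and eg: "(\<integral>x. exp (g x) \<partial>Q) \<le> 1"
    and pos: "0 < KL_divergence (exp 1) Q P"
  shows "(\<integral>x. g x \<partial>P) \<le> KL_divergence (exp 1) Q P"
proof -
  interpret Q: prob_space Q by fact
  interpret P: prob_space P by fact
  define \<rho> where "\<rho> = (\<lambda>x. enn2real (RN_deriv Q P x))"
  have \<rho>m[measurable]: "\<rho> \<in> borel_measurable Q" unfolding \<rho>_def by measurable
  have \<rho>nn: "\<And>x. 0 \<le> \<rho> x" unfolding \<rho>_def by simp
  have sfP: "sigma_finite_measure P" by (rule P.sigma_finite_measure_axioms)
  have KL: "KL_divergence (exp 1) Q P = (\<integral>x. ln (\<rho> x) \<partial>P)"
    unfolding KL_divergence_def entropy_density_def \<rho>_def log_def by (simp add: comp_def)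
  have int_ln: "integrable P (\<lambda>x. ln (\<rho> x))"
  proof (rule ccontr)
    assume "\<not> ?thesis"
    then have "(\<integral>x. ln (\<rho> x) \<partial>P) = 0" by (rule not_integrable_integral_eq)
    with pos KL show False by simp
  qed
  have meq: "(borel_measurable P :: ('b \<Rightarrow> real) set) = borel_measurable Q"
    by (rule measurable_cong_sets[OF sets_eq refl])
  have gmP[measurable]: "g \<in> borel_measurable P" using gm meq by simp
  have \<rho>mP[measurable]: "\<rho> \<in> borel_measurable P" using \<rho>m meq by simp
  have egm[measurable]: "(\<lambda>x. exp (g x)) \<in> borel_measurable Q" using gm by measurable
  have egb: "\<And>x. norm (exp (g x)) \<le> exp B" using gb by (simp add: abs_le_iff)
  have intgP: "integrable P g"
    by (rule P.integrable_const_bound[where B=B]) (use gb in auto)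
  have "(\<integral>x. g x \<partial>P) - KL_divergence (exp 1) Q P = (\<integral>x. g x - ln (\<rho> x) \<partial>P)"
    using KL intgP int_ln by simp
  also have "\<dots> = (\<integral>x. \<rho> x * (g x - ln (\<rho> x)) \<partial>Q)"
    unfolding \<rho>_def by (rule Q.RN_deriv_integral[OF sfP ac sets_eq]) (use gm in measurable)
  also have "\<dots> \<le> (\<integral>x. exp (g x) - \<rho> x \<partial>Q)"
  proof (rule integral_mono)
    show "integrable Q (\<lambda>x. \<rho> x * (g x - ln (\<rho> x)))"
      unfolding \<rho>_def
      by (rule Q.RN_deriv_integrable[OF sfP ac sets_eq, THEN iffD1])
         (use gm in measurable, use intgP int_ln in \<open>auto simp: \<rho>_def\<close>)
    have i1: "integrable Q (\<lambda>x. exp (g x))"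
      by (rule Q.integrable_const_bound[where B="exp B"]) (use egb egm in auto)
    have i2: "integrable Q (\<lambda>x. \<rho> x * 1)"
      unfolding \<rho>_def
      by (rule Q.RN_deriv_integrable[OF sfP ac sets_eq, THEN iffD1]) auto
    show "integrable Q (\<lambda>x. exp (g x) - \<rho> x)" using i1 i2 by simp
    fix x
    show "\<rho> x * (g x - ln (\<rho> x)) \<le> exp (g x) - \<rho> x"
    proof (cases "\<rho> x = 0")
      case True then show ?thesis by simp
    next
      case False
      then have rp: "0 < \<rho> x" using \<rho>nn[of x] by simp
      have "ln (exp (g x) / \<rho> x) \<le> exp (g x) / \<rho> x - 1"
        by (rule ln_le_minus_one) (use rp in simp)
      also have "ln (exp (g x) / \<rho> x) = g x - ln (\<rho> x)" using rp by (simp add: ln_div)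
      finally have "\<rho> x * (g x - ln (\<rho> x)) \<le> \<rho> x * (exp (g x) / \<rho> x - 1)"
        using rp by (intro mult_left_mono) auto
      also have "\<dots> = exp (g x) - \<rho> x" using rp by (simp add: field_simps)
      finally show ?thesis .
    qed
  qed
  also have "\<dots> = (\<integral>x. exp (g x) \<partial>Q) - (\<integral>x. \<rho> x * 1 \<partial>Q)"
  proof -
    have i1: "integrable Q (\<lambda>x. exp (g x))"
      by (rule Q.integrable_const_bound[where B="exp B"]) (use egb egm in auto)
    have i2: "integrable Q (\<lambda>x. \<rho> x * 1)"
      unfolding \<rho>_def
      by (rule Q.RN_deriv_integrable[OF sfP ac sets_eq, THEN iffD1]) auto
    show ?thesis using i1 i2 by simp
  qed
  also have "(\<integral>x. \<rho> x * 1 \<partial>Q) = (\<integral>x. 1 \<partial>P)"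
    unfolding \<rho>_def by (rule Q.RN_deriv_integral[OF sfP ac sets_eq, symmetric]) auto
  also have "(\<integral>x. 1 \<partial>P) = (1::real)" using P.prob_space by simp
  finally show ?thesis using eg by simp
qed



lemma hoeff_pos:
  fixes X :: "'a \<Rightarrow> real" and l :: real
  assumes P: "prob_space M" and Xm: "X \<in> borel_measurable M" and Xb: "\<And>x. 0 \<le> X x \<and> X x \<le> 1"
    and l: "0 < l"
  shows "(\<integral>x. exp (l * (X x - prob_space.expectation M X)) \<partial>M) \<le> exp (l\<^sup>2 / 8)"
proof -
  interpret prob_space M by fact
  interpret interval_bounded_random_variable M X 0 1
    by unfold_locales (use Xm Xb in auto)
  have nn: "nn_integral M (\<lambda>x. exp (l * (X x - expectation X))) \<le> ennreal (exp (l\<^sup>2 * (1 - 0)\<^sup>2 / 8))"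
    by (rule Hoeffdings_lemma_nn_integral) (use l in auto)
  have "integrable M (\<lambda>x. exp (l * (X x - expectation X)))"
  proof (rule integrable_const_bound[where B="exp (l * (1 - expectation X))"])
    show "AE x in M. norm (exp (l * (X x - expectation X))) \<le> exp (l * (1 - expectation X))"
      using Xb l by (auto intro!: AE_I2 mult_left_mono)
  qed (use Xm in measurable)
  then have "nn_integral M (\<lambda>x. exp (l * (X x - expectation X))) = ennreal (\<integral>x. exp (l * (X x - expectation X)) \<partial>M)"
    by (intro nn_integral_eq_integral) auto
  with nn show ?thesis by simp
qed

lemma hoeff_all:
  fixes X :: "'a \<Rightarrow> real" and l :: real
  assumes P: "prob_space M" and Xm: "X \<in> borel_measurable M" and Xb: "\<And>x. 0 \<le> X x \<and> X x \<le> 1"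
  shows "(\<integral>x. exp (l * (X x - prob_space.expectation M X) - l\<^sup>2 / 8) \<partial>M) \<le> 1"
proof -
  interpret prob_space M by fact
  have intX: "integrable M X"
    by (rule integrable_const_bound[where B=1]) (use Xm Xb in \<open>auto intro!: AE_I2 simp: abs_le_iff\<close>)
  have main: "(\<integral>x. exp (l * (X x - expectation X)) \<partial>M) \<le> exp (l\<^sup>2 / 8)"
  proof (cases "0 < l")
    case True then show ?thesis using hoeff_pos[OF P Xm Xb] by blast
  next
    case False
    show ?thesis
    proof (cases "l = 0")
      case True then show ?thesis using prob_space by simp
    next
      case False2: False
      with False have l: "0 < - l" by simp
      have Ym: "(\<lambda>x. 1 - X x) \<in> borel_measurable M" using Xm by measurable
      have Yb: "\<And>x. 0 \<le> 1 - X x \<and> 1 - X x \<le> 1" using Xb by auto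
      have EY: "expectation (\<lambda>x. 1 - X x) = 1 - expectation X"
        using intX prob_space by (simp add: Bochner_Integration.integral_diff)
      have "(\<integral>x. exp (- l * ((1 - X x) - expectation (\<lambda>x. 1 - X x))) \<partial>M) \<le> exp ((-l)\<^sup>2 / 8)"
        by (rule hoeff_pos[OF P Ym Yb l])
      moreover have "\<And>x. - l * ((1 - X x) - expectation (\<lambda>x. 1 - X x)) = l * (X x - expectation X)"
        unfolding EY by (simp add: algebra_simps)
      ultimately show ?thesis by simp
    qed
  qed
  have "(\<integral>x. exp (l * (X x - expectation X) - l\<^sup>2 / 8) \<partial>M)
      = (\<integral>x. exp (l * (X x - expectation X)) / exp (l\<^sup>2 / 8) \<partial>M)"
    by (simp add: exp_diff)
  also have "\<dots> = (\<integral>x. exp (l * (X x - expectation X)) \<partial>M) / exp (l\<^sup>2 / 8)"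
    by simp
  also have "\<dots> \<le> 1" using main by simp
  finally show ?thesis .
qed



lemma sum_ind:
  fixes f :: "'a::finite \<Rightarrow> real"
  shows "(\<Sum>a\<in>UNIV. indicator {a} x * f a) = f x"
proof -
  have "(\<Sum>a\<in>UNIV. indicator {a} x * f a) = (\<Sum>a\<in>UNIV. if x = a then f a else 0)"
    by (intro sum.cong) (auto simp: indicator_def)
  then show ?thesis by simp
qed

theorem proposition2:
  fixes M :: "'o measure"
    and Theta :: "'t measure" and theta :: "'o \<Rightarrow> 't"
    and Zsp :: "'z measure" and Z :: "'a::finite set \<Rightarrow> 'o \<Rightarrow> 'z"
    and E :: "('a \<times> 'a) set"
    and R :: "'a \<times> 'z \<Rightarrow> real"
    and Astar At :: "'o \<Rightarrow> 'a"
  defines "Y \<equiv> class_outcome E Z"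
  defines "Ysp \<equiv> (count_space UNIV \<Otimes>\<^sub>M Zsp :: ('a \<times> 'z) measure)"
  defines "F\<theta> \<equiv> vimage_algebra (space M) theta Theta"
  assumes M: "prob_space M"
    and equiv: "equiv UNIV E"
    and theta: "theta \<in> measurable M Theta"
    and Z: "\<And>c. c \<in> UNIV // E \<Longrightarrow> Z c \<in> measurable M Zsp"
    and R_meas: "R \<in> borel_measurable Ysp"
    and R_range: "\<And>y. 0 \<le> R y \<and> R y \<le> 1"
    \<comment> \<open>A* is the optimal arm: a function of theta maximising E[R(Y_a) | theta]\<close>
    and Astar_meas: "Astar \<in> measurable F\<theta> (count_space UNIV)"
    and Astar_opt: "AE \<omega> in M. \<forall>a. real_cond_exp M F\<theta> (\<lambda>\<omega>'. R (Y a \<omega>')) \<omega>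
                                   \<le> real_cond_exp M F\<theta> (\<lambda>\<omega>'. R (Y (Astar \<omega>) \<omega>')) \<omega>"
    \<comment> \<open>Thompson sampling: A_t independent of (theta, Y_t), with the law of A*\<close>
    and At_meas: "At \<in> measurable M (count_space UNIV)"
    and At_indep: "prob_space.indep_set M
                     (sets (vimage_algebra (space M) At (count_space UNIV)))
                     (sets (vimage_algebra (space M) (\<lambda>\<omega>. (theta \<omega>, \<lambda>a. Y a \<omega>))
                                          (Theta \<Otimes>\<^sub>M PiM UNIV (\<lambda>_. Ysp))))"
    and TS: "\<And>a. measure M {\<omega>\<in>space M. At \<omega> = a} = measure M {\<omega>\<in>space M. Astar \<omega> = a}"
  shows "info_ratio M Ysp R Y Astar At \<le> real (card (UNIV // E)) / 2"
proof -
  interpret prob_space M by (rule M)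
  define cls where "cls = (\<lambda>a. E `` {a})"
  have cls_q: "\<And>a. cls a \<in> UNIV // E" unfolding cls_def by (rule quotientI) simp
  have Yeq: "\<And>a \<omega>. Y a \<omega> = (a, Z (cls a) \<omega>)"
    unfolding Y_def cls_def class_outcome_def by simp
  have E_sym: "\<And>a b. (a, b) \<in> E \<Longrightarrow> (b, a) \<in> E" using equiv unfolding equiv_def sym_def by blast
  have cls_eq: "\<And>a b. (a, b) \<in> E \<Longrightarrow> cls a = cls b"
    unfolding cls_def by (rule equiv_class_eq[OF equiv])
  have in_cls: "\<And>a b. b \<in> cls a \<longleftrightarrow> (a, b) \<in> E" unfolding cls_def by simp
  have Erefl: "\<And>a. (a, a) \<in> E" using equiv unfolding equiv_def refl_on_def by blast
  note [measurable] = At_meas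
  have Zm[measurable]: "\<And>a. Z (cls a) \<in> measurable M Zsp" using Z cls_q by blast
  have Ym[measurable]: "\<And>a. (\<lambda>\<omega>. Y a \<omega>) \<in> measurable M Ysp"
    unfolding Yeq Ysp_def by measurable
  have Rm[measurable]: "R \<in> borel_measurable (count_space UNIV \<Otimes>\<^sub>M Zsp)"
    using R_meas unfolding Ysp_def .
  have RYm[measurable]: "\<And>a. (\<lambda>\<omega>. R (Y a \<omega>)) \<in> borel_measurable M"
    using Ym R_meas by measurable
  have theta_sp: "theta \<in> space M \<rightarrow> space Theta" using theta by (auto dest: measurable_space)
  have Astar_M[measurable]: "Astar \<in> measurable M (count_space UNIV)"
  proof -
    have "sets F\<theta> \<subseteq> sets M" unfolding F\<theta>_def by (rule sets_image_in_sets[OF refl theta])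
    then show ?thesis
      using Astar_meas measurable_mono[of "count_space UNIV" "count_space UNIV" F\<theta> M] 
      unfolding F\<theta>_def by auto
  qed
  define NN where "NN = (Theta \<Otimes>\<^sub>M PiM UNIV (\<lambda>_::'a. Ysp))"
  define \<phi> where "\<phi> = (\<lambda>\<omega>. (theta \<omega>, \<lambda>a. Y a \<omega>))"
  define F2 where "F2 = vimage_algebra (space M) \<phi> NN"
  have \<phi>m: "\<phi> \<in> measurable M NN"
    unfolding \<phi>_def NN_def
    by (intro measurable_Pair theta measurable_PiM_single') (auto simp: Ym measurable_space[OF Ym])
  have sF2: "sets F2 \<subseteq> sets M" unfolding F2_def by (rule sets_image_in_sets[OF refl \<phi>m])
  have spF2[simp]: "space F2 = space M" unfolding F2_def by simp
  have \<phi>F2: "\<phi> \<in> measurable F2 NN" unfolding F2_def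
    by (rule measurable_vimage_algebra1) (use \<phi>m in \<open>auto dest: measurable_space\<close>)
  have YF2[measurable]: "\<And>b. (\<lambda>\<omega>. Y b \<omega>) \<in> measurable F2 Ysp"
  proof -
    fix b
    have "(\<lambda>x. snd x b) \<in> measurable NN Ysp" unfolding NN_def by measurable
    from measurable_comp[OF \<phi>F2 this] show "(\<lambda>\<omega>. Y b \<omega>) \<in> measurable F2 Ysp"
      by (simp add: comp_def \<phi>_def)
  qed
  have AstarF2[measurable]: "Astar \<in> measurable F2 (count_space UNIV)"
  proof -
    have thF2: "theta \<in> measurable F2 Theta"
    proof -
      have "fst \<in> measurable NN Theta" unfolding NN_def by measurable
      from measurable_comp[OF \<phi>F2 this] show ?thesis by (simp add: comp_def \<phi>_def)
    qed
    have "sets F\<theta> \<subseteq> sets F2" unfolding F\<theta>_def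
      by (rule sets_image_in_sets[OF _ thF2]) simp
    then show ?thesis
      using Astar_meas measurable_mono[of "count_space UNIV" "count_space UNIV" F\<theta> F2]
      unfolding F\<theta>_def by auto
  qed
  define FA where "FA = vimage_algebra (space M) At (count_space UNIV)"
  have indepv: "indep_var borel X1 borel X2"
    if X1m: "X1 \<in> borel_measurable FA" and X2m: "X2 \<in> borel_measurable F2" for X1 X2 :: "'o \<Rightarrow> real"
  proof -
    have sFA: "sets FA \<subseteq> sets M" unfolding FA_def by (rule sets_image_in_sets[OF refl At_meas])
    have spFA: "space FA = space M" unfolding FA_def by simp
    have X1M: "X1 \<in> borel_measurable M"
      using X1m measurable_mono[of borel borel FA M] sFA spFA by auto
    have X2M: "X2 \<in> borel_measurable M"
      using X2m measurable_mono[of borel borel F2 M] sF2 by auto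
    have "indep_sets (case_bool (sets FA) (sets F2)) UNIV"
      using At_indep unfolding indep_set_def F2_def NN_def \<phi>_def FA_def .
    then have "indep_sets (\<lambda>i. {case_bool X1 X2 i -` A \<inter> space M | A. A \<in> sets (case_bool borel borel i)}) UNIV"
    proof (rule indep_sets_mono_sets)
      fix i :: bool
      show "{case_bool X1 X2 i -` A \<inter> space M | A. A \<in> sets (case_bool borel borel i)} \<subseteq> case_bool (sets FA) (sets F2) i"
      proof (cases i)
        case True
        then show ?thesis using measurable_sets[OF X1m] spFA by auto
      next
        case False
        then show ?thesis using measurable_sets[OF X2m] by auto
      qed
    qed
    then show ?thesis
      unfolding indep_var_def indep_vars_def2 using X1M X2M by (auto split: bool.split)
  qed
  have intb: "integrable M f" if "f \<in> borel_measurable M" "\<And>\<omega>. \<bar>f \<omega>\<bar> \<le> B" for f :: "'o \<Rightarrow> real" and B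
    by (rule integrable_const_bound[where B=B]) (use that in auto)
  have F2M: "f \<in> borel_measurable M" if "f \<in> borel_measurable F2" for f :: "'o \<Rightarrow> real"
    using that measurable_mono[of borel borel F2 M] sF2 by auto
  have indFA: "(\<lambda>\<omega>. indicator {a} (At \<omega>) :: real) \<in> borel_measurable FA" for a
  proof -
    have "At \<in> measurable FA (count_space UNIV)" unfolding FA_def
      by (rule measurable_vimage_algebra1) auto
    then show ?thesis by measurable
  qed
  define p where "p = (\<lambda>a. expectation (\<lambda>\<omega>. indicator {a} (Astar \<omega>) :: real))"
  have ind_meas: "expectation (\<lambda>\<omega>. indicator {a} (f \<omega>) :: real) = measure M {\<omega>\<in>space M. f \<omega> = a}"
    if "f \<in> measurable M (count_space UNIV)" for f :: "'o \<Rightarrow> 'a" and a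
  proof -
    have "expectation (\<lambda>\<omega>. indicator {a} (f \<omega>) :: real) = expectation (indicator {\<omega>\<in>space M. f \<omega> = a})"
      by (rule Bochner_Integration.integral_cong) (auto simp: indicator_def)
    also have "\<dots> = measure M {\<omega>\<in>space M. f \<omega> = a}"
    proof -
      have "{\<omega>\<in>space M. f \<omega> = a} \<in> sets M" using that by measurable
      then show ?thesis by simp
    qed
    finally show ?thesis .
  qed
  have pAt: "expectation (\<lambda>\<omega>. indicator {a} (At \<omega>) :: real) = p a" for a
    unfolding p_def using ind_meas[OF At_meas] ind_meas[OF Astar_M] TS by simp
  have IND: "expectation (\<lambda>\<omega>. indicator {a} (At \<omega>) * h \<omega>) = p a * expectation h"
    if hm: "h \<in> borel_measurable F2" and hb: "\<And>\<omega>. \<bar>h \<omega>\<bar> \<le> B" for a and h :: "'o \<Rightarrow> real" and B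
  proof -
    have "expectation (\<lambda>\<omega>. indicator {a} (At \<omega>) * h \<omega>) = expectation (\<lambda>\<omega>. indicator {a} (At \<omega>)::real) * expectation h"
    proof (rule indep_var_lebesgue_integral)
      show "indep_var borel (\<lambda>\<omega>. indicator {a} (At \<omega>)::real) borel h"
        by (rule indepv[OF indFA hm])
      show "integrable M (\<lambda>\<omega>. indicator {a} (At \<omega>)::real)"
        by (rule intb[of _ 1]) auto
      show "integrable M h" by (rule intb[OF F2M[OF hm] hb])
    qed
    then show ?thesis using pAt by simp
  qed
  have RYF2: "(\<lambda>\<omega>. R (Y a \<omega>)) \<in> borel_measurable F2" for a
    using YF2 R_meas by measurable
  have Rb: "\<bar>R y\<bar> \<le> 1" for y using R_range[of y] by auto
  define m where "m = (\<lambda>a. expectation (\<lambda>\<omega>. R (Y a \<omega>)))"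
  define D where "D = (\<lambda>a. expectation (\<lambda>\<omega>. indicator {a} (Astar \<omega>) * R (Y a \<omega>)) - p a * m a)"
  define \<Delta> where "\<Delta> = expectation (\<lambda>\<omega>. R (Y (Astar \<omega>) \<omega>) - R (Y (At \<omega>) \<omega>))"
  have RYsm[measurable]: "(\<lambda>\<omega>. R (Y (Astar \<omega>) \<omega>)) \<in> borel_measurable M"
    by (rule measurable_compose_countable[OF RYm Astar_M])
  have RYtm[measurable]: "(\<lambda>\<omega>. R (Y (At \<omega>) \<omega>)) \<in> borel_measurable M"
    by (rule measurable_compose_countable[OF RYm At_meas])
  have indRm: "(\<lambda>\<omega>. indicator {a} (f \<omega>) * R (Y b \<omega>) :: real) \<in> borel_measurable M"
    if "f \<in> measurable M (count_space UNIV)" for f :: "'o \<Rightarrow> 'a" and a b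
    using that by measurable
  have indRb: "\<bar>indicator {a} x * R y :: real\<bar> \<le> 1" for a x y
    using Rb[of y] by (auto simp: indicator_def)
  have E1: "expectation (\<lambda>\<omega>. R (Y (Astar \<omega>) \<omega>)) = (\<Sum>a\<in>UNIV. expectation (\<lambda>\<omega>. indicator {a} (Astar \<omega>) * R (Y a \<omega>)))"
  proof -
    have "expectation (\<lambda>\<omega>. R (Y (Astar \<omega>) \<omega>)) = expectation (\<lambda>\<omega>. \<Sum>a\<in>UNIV. indicator {a} (Astar \<omega>) * R (Y a \<omega>))"
      by (simp add: sum_ind[where f="\<lambda>a. R (Y a _)"])
    also have "\<dots> = (\<Sum>a\<in>UNIV. expectation (\<lambda>\<omega>. indicator {a} (Astar \<omega>) * R (Y a \<omega>)))"
      by (rule Bochner_Integration.integral_sum) (rule intb[OF indRm[OF Astar_M] indRb])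
    finally show ?thesis .
  qed
  have E2: "expectation (\<lambda>\<omega>. R (Y (At \<omega>) \<omega>)) = (\<Sum>a\<in>UNIV. p a * m a)"
  proof -
    have "expectation (\<lambda>\<omega>. R (Y (At \<omega>) \<omega>)) = expectation (\<lambda>\<omega>. \<Sum>a\<in>UNIV. indicator {a} (At \<omega>) * R (Y a \<omega>))"
      by (simp add: sum_ind[where f="\<lambda>a. R (Y a _)"])
    also have "\<dots> = (\<Sum>a\<in>UNIV. expectation (\<lambda>\<omega>. indicator {a} (At \<omega>) * R (Y a \<omega>)))"
      by (rule Bochner_Integration.integral_sum) (rule intb[OF indRm[OF At_meas] indRb])
    also have "\<dots> = (\<Sum>a\<in>UNIV. p a * m a)"
      unfolding m_def by (intro sum.cong refl IND[OF RYF2 Rb])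
    finally show ?thesis .
  qed
  have Delta_eq: "\<Delta> = (\<Sum>a\<in>UNIV. D a)"
  proof -
    have "\<Delta> = expectation (\<lambda>\<omega>. R (Y (Astar \<omega>) \<omega>)) - expectation (\<lambda>\<omega>. R (Y (At \<omega>) \<omega>))"
      unfolding \<Delta>_def
      by (rule Bochner_Integration.integral_diff; rule intb[OF _ Rb]; measurable)
    then show ?thesis unfolding E1 E2 D_def by (simp add: sum_subtractf)
  qed
  have psum: "(\<Sum>a\<in>UNIV. p a) = 1"
  proof -
    have "(\<Sum>a\<in>UNIV. p a) = expectation (\<lambda>\<omega>. \<Sum>a\<in>UNIV. indicator {a} (Astar \<omega>) * (1::real))"
      unfolding p_def by (subst Bochner_Integration.integral_sum) (auto intro!: intb[of _ 1])
    also have "\<dots> = 1"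
    proof -
      have "\<And>\<omega>. (\<Sum>a\<in>UNIV. indicator {a} (Astar \<omega>) * (1::real)) = 1" by (rule sum_ind)
      then show ?thesis by (simp only:) (simp add: prob_space)
    qed
    finally show ?thesis .
  qed
  have p_nn: "0 \<le> p a" for a unfolding p_def by simp
  have D0: "D a = 0" if "p a = 0" for a
  proof -
    have "\<bar>expectation (\<lambda>\<omega>. indicator {a} (Astar \<omega>) * R (Y a \<omega>))\<bar> \<le> expectation (\<lambda>\<omega>. indicator {a} (Astar \<omega>) :: real)"
    proof -
      have "\<bar>expectation (\<lambda>\<omega>. indicator {a} (Astar \<omega>) * R (Y a \<omega>))\<bar> \<le> expectation (\<lambda>\<omega>. \<bar>indicator {a} (Astar \<omega>) * R (Y a \<omega>)\<bar>)"
        by (rule integral_abs_bound)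
      also have "\<dots> \<le> expectation (\<lambda>\<omega>. indicator {a} (Astar \<omega>) :: real)"
        by (rule integral_mono) (auto intro!: intb[of _ 1] simp: indicator_def Rb abs_mult)
      finally show ?thesis .
    qed
    with that show ?thesis unfolding D_def p_def by simp
  qed
  define N where "N = real (card (UNIV // E))"
  have Npos: "0 < N"
  proof -
    have "finite (UNIV // E)" by (rule finite_quotient) auto
    moreover have "UNIV // E \<noteq> {}" by (simp add: quotient_def)
    ultimately show ?thesis unfolding N_def by (simp add: card_gt_0_iff)
  qed
  define \<mu> where "\<mu> = 4 * \<Delta> / N"
  define Pc where "Pc = (\<lambda>a. \<Sum>b\<in>cls a. p b)"
  define l where "l = (\<lambda>a. \<mu> / Pc a)"
  define G where "G = (\<lambda>(a::'a) (b::'a) (z::'z). if (a, b) \<in> E then l b * (R (a, z) - m a) - (l b)\<^sup>2 / 8 else 0)"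
  define g where "g = (\<lambda>x::'a \<times> ('a \<times> ('a \<times> 'z)). G (fst x) (fst (snd x)) (snd (snd (snd x))))"
  define T where "T = (count_space UNIV :: 'a measure) \<Otimes>\<^sub>M Ysp"
  define W where "W = (\<lambda>\<omega>. (At \<omega>, Y (At \<omega>) \<omega>))"
  define Qm where "Qm = distr M (count_space UNIV) Astar \<Otimes>\<^sub>M distr M T W"
  define Pm where "Pm = distr M (count_space UNIV \<Otimes>\<^sub>M T) (\<lambda>\<omega>. (Astar \<omega>, W \<omega>))"
  define MI where "MI = KL_divergence (exp 1) Qm Pm"
  have ratio: "info_ratio M Ysp R Y Astar At = \<Delta>\<^sup>2 / MI"
    unfolding info_ratio_def \<Delta>_def MI_def Qm_def Pm_def T_def W_def mutual_information_def ..
  define T2 where "T2 = (\<Sum>b\<in>UNIV. \<Sum>a\<in>UNIV. if (a, b) \<in> E then p b * (l b * D a - (l b)\<^sup>2 * p a / 8) else 0)"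
  have S5: "\<mu> * \<Delta> - N * \<mu>\<^sup>2 / 8 \<le> T2"
  proof -
    have memcls: "a \<in> cls b \<longleftrightarrow> (a, b) \<in> E" for a b using in_cls E_sym by blast
    have self: "b \<in> cls b" for b using in_cls Erefl by blast
    have Pc_nn: "0 \<le> Pc b" for b unfolding Pc_def by (intro sum_nonneg p_nn)
    have p_le: "p b \<le> Pc b" for b
      unfolding Pc_def by (rule member_le_sum) (auto intro: p_nn self)
    have Pc_eq: "Pc a = Pc b" if "(a, b) \<in> E" for a b
      unfolding Pc_def using cls_eq[OF that] by simp
    define S where "S = (\<lambda>b. \<Sum>a\<in>cls b. D a)"
    have filt: "(\<Sum>a\<in>UNIV. if (a, b) \<in> E then f a else 0) = (\<Sum>a\<in>cls b. f a)" for b and f :: "'a \<Rightarrow> real"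
    proof -
      have "cls b = {a\<in>UNIV. (a, b) \<in> E}" using memcls by auto
      then show ?thesis using sum.inter_filter[of UNIV f "\<lambda>a. (a, b) \<in> E"] by simp
    qed
    have inner: "(\<Sum>a\<in>UNIV. if (a, b) \<in> E then p b * (l b * D a - (l b)\<^sup>2 * p a / 8) else 0)
        = (p b / Pc b) * (\<mu> * S b - \<mu>\<^sup>2 / 8)" for b
    proof -
      have "(\<Sum>a\<in>UNIV. if (a, b) \<in> E then p b * (l b * D a - (l b)\<^sup>2 * p a / 8) else 0)
          = (\<Sum>a\<in>cls b. p b * (l b * D a - (l b)\<^sup>2 * p a / 8))" by (rule filt)
      also have "\<dots> = p b * (l b * S b - (l b)\<^sup>2 * Pc b / 8)"
        unfolding S_def Pc_def
        by (simp add: sum_distrib_left sum_distrib_right sum_subtractf sum_divide_distrib[symmetric] algebra_simps)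
      also have "\<dots> = (p b / Pc b) * (\<mu> * S b - \<mu>\<^sup>2 / 8)"
      proof (cases "Pc b = 0")
        case True
        then have "p b = 0" using p_le[of b] p_nn[of b] by simp
        then show ?thesis using True by simp
      next
        case False
        then show ?thesis unfolding l_def by (simp add: field_simps power2_eq_square)
      qed
      finally show ?thesis .
    qed
    have T2eq: "T2 = \<mu> * (\<Sum>b\<in>UNIV. (p b / Pc b) * S b) - \<mu>\<^sup>2 / 8 * (\<Sum>b\<in>UNIV. p b / Pc b)"
      unfolding T2_def inner
      by (simp add: sum_distrib_left sum_subtractf algebra_simps)
    have A: "(\<Sum>b\<in>UNIV. (p b / Pc b) * S b) = \<Delta>"
    proof -
      have "(\<Sum>b\<in>UNIV. (p b / Pc b) * S b) = (\<Sum>b\<in>UNIV. \<Sum>a\<in>UNIV. if (a, b) \<in> E then (p b / Pc b) * D a else 0)"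
        unfolding S_def by (simp add: filt sum_distrib_left)
      also have "\<dots> = (\<Sum>a\<in>UNIV. \<Sum>b\<in>UNIV. if (a, b) \<in> E then (p b / Pc b) * D a else 0)"
        by (rule sum.swap)
      also have "\<dots> = (\<Sum>a\<in>UNIV. \<Sum>b\<in>UNIV. if (b, a) \<in> E then (p b / Pc a) * D a else 0)"
      proof (intro sum.cong refl)
        fix a b
        show "(if (a, b) \<in> E then (p b / Pc b) * D a else 0) = (if (b, a) \<in> E then (p b / Pc a) * D a else 0)"
        proof (cases "(a, b) \<in> E")
          case True
          then have "(b, a) \<in> E" by (rule E_sym)
          with True show ?thesis using Pc_eq[OF True] by simp
        next
          case False
          then have "(b, a) \<notin> E" using E_sym by blast
          with False show ?thesis by simp
        qed
      qed
      also have "\<dots> = (\<Sum>a\<in>UNIV. (Pc a / Pc a) * D a)"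
        by (intro sum.cong refl) (simp add: filt[of a "\<lambda>b. (p b / Pc a) * D a" for a] Pc_def sum_divide_distrib[symmetric] sum_distrib_right[symmetric])
      also have "\<dots> = (\<Sum>a\<in>UNIV. D a)"
      proof (intro sum.cong refl)
        fix a
        show "(Pc a / Pc a) * D a = D a"
        proof (cases "Pc a = 0")
          case True
          then have "p a = 0" using p_le[of a] p_nn[of a] by simp
          then show ?thesis using D0 by simp
        qed simp
      qed
      finally show ?thesis using Delta_eq by simp
    qed
    have B: "(\<Sum>b\<in>UNIV. p b / Pc b) \<le> N"
    proof -
      have img: "cls ` UNIV = UNIV // E" unfolding cls_def quotient_def by auto
      have "(\<Sum>b\<in>UNIV. p b / Pc b) = (\<Sum>c\<in>cls ` UNIV. \<Sum>b\<in>{x\<in>UNIV. cls x = c}. p b / Pc b)"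
        by (rule sum.image_gen) simp
      also have "\<dots> \<le> (\<Sum>c\<in>cls ` UNIV. 1)"
      proof (rule sum_mono)
        fix c assume "c \<in> cls ` UNIV"
        then obtain a0 where c: "c = cls a0" by auto
        have set: "{x\<in>UNIV. cls x = c} = cls a0"
          unfolding c cls_def using equiv_class_eq_iff[OF equiv] by auto
        have "(\<Sum>b\<in>{x\<in>UNIV. cls x = c}. p b / Pc b) = (\<Sum>b\<in>cls a0. p b / Pc a0)"
          unfolding set by (intro sum.cong refl) (metis Pc_eq memcls)
        also have "\<dots> = Pc a0 / Pc a0" unfolding Pc_def by (simp add: sum_divide_distrib[symmetric])
        also have "\<dots> \<le> 1" by (cases "Pc a0 = 0") auto
        finally show "(\<Sum>b\<in>{x\<in>UNIV. cls x = c}. p b / Pc b) \<le> 1" .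
      qed
      also have "\<dots> = N" unfolding N_def img by simp
      finally show ?thesis .
    qed
    have "\<mu> * \<Delta> - N * \<mu>\<^sup>2 / 8 \<le> \<mu> * \<Delta> - \<mu>\<^sup>2 / 8 * (\<Sum>b\<in>UNIV. p b / Pc b)"
    proof -
      have "\<mu>\<^sup>2 * (\<Sum>b\<in>UNIV. p b / Pc b) \<le> \<mu>\<^sup>2 * N" using B by (intro mult_left_mono) auto
      then show ?thesis by (simp add: algebra_simps)
    qed
    then show ?thesis unfolding T2eq A .
  qed
  have mb: "\<bar>m a\<bar> \<le> 1" for a
  proof -
    have "\<bar>m a\<bar> \<le> expectation (\<lambda>\<omega>. \<bar>R (Y a \<omega>)\<bar>)" unfolding m_def by (rule integral_abs_bound)
    also have "\<dots> \<le> expectation (\<lambda>\<omega>. 1::real)"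
      by (rule integral_mono) (auto intro!: intb[of _ 1] Rb)
    finally show ?thesis by (simp add: prob_space)
  qed
  define Lb where "Lb = (\<Sum>b\<in>UNIV. \<bar>l b\<bar>)"
  have lb: "\<bar>l b\<bar> \<le> Lb" for b unfolding Lb_def by (rule member_le_sum) auto
  have Bnn: "0 \<le> 2 * Lb + Lb\<^sup>2 / 8"
  proof -
    have "0 \<le> Lb" using lb[of undefined] by linarith
    then show ?thesis by simp
  qed
  have Gb: "\<bar>G a b z\<bar> \<le> 2 * Lb + Lb\<^sup>2 / 8" for a b z
  proof -
    have Lnn: "0 \<le> Lb" using lb[of b] by linarith
    have "\<bar>R (a, z) - m a\<bar> \<le> 2" using Rb[of "(a,z)"] mb[of a] by linarith
    then have "\<bar>l b * (R (a, z) - m a)\<bar> \<le> Lb * 2"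
      unfolding abs_mult by (intro mult_mono lb) (auto simp: Lnn)
    moreover have "(l b)\<^sup>2 \<le> Lb\<^sup>2"
      using lb[of b] by (metis abs_ge_zero power2_abs power_mono)
    moreover have "\<bar>(l b)\<^sup>2 / 8\<bar> = (l b)\<^sup>2 / 8" by simp
    moreover have "0 \<le> Lb\<^sup>2" by simp
    moreover note abs_triangle_ineq4[of "l b * (R (a, z) - m a)" "(l b)\<^sup>2 / 8"]
    ultimately have H: "\<bar>l b * (R (a, z) - m a) - (l b)\<^sup>2 / 8\<bar> \<le> 2 * Lb + Lb\<^sup>2 / 8" by linarith
    have "0 \<le> 2 * Lb + Lb\<^sup>2 / 8" using Lnn by simp
    with H show ?thesis unfolding G_def by simp
  qed
  have Gm[measurable]: "(\<lambda>z. G a b z) \<in> borel_measurable Zsp" for a b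
    unfolding G_def by measurable
  have sndY: "snd \<in> measurable Ysp Zsp" unfolding Ysp_def by measurable
  have ZF2[measurable]: "(\<lambda>\<omega>. Z (cls b) \<omega>) \<in> measurable F2 Zsp" for b
    using measurable_comp[OF YF2[of b] sndY] by (simp add: comp_def Yeq)
  define H where "H = (\<lambda>b \<omega>. G (Astar \<omega>) b (Z (cls b) \<omega>))"
  have HF2: "H b \<in> borel_measurable F2" for b
    unfolding H_def by (rule measurable_compose_countable[OF _ AstarF2]) measurable
  have Hb: "\<bar>H b \<omega>\<bar> \<le> 2 * Lb + Lb\<^sup>2 / 8" for b \<omega> unfolding H_def by (rule Gb)
  have Wm[measurable]: "W \<in> measurable M T"
    unfolding W_def T_def by (intro measurable_Pair At_meas measurable_compose_countable[OF Ym At_meas])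
  have gm[measurable]: "g \<in> borel_measurable (count_space UNIV \<Otimes>\<^sub>M T)"
  proof -
    have Gsm: "(\<lambda>x::'a \<times> ('a \<times> ('a \<times> 'z)). G a b (snd (snd (snd x)))) \<in> borel_measurable (count_space UNIV \<Otimes>\<^sub>M T)" for a b
    proof -
      have "(\<lambda>x::'a \<times> ('a \<times> ('a \<times> 'z)). snd (snd (snd x))) \<in> measurable (count_space UNIV \<Otimes>\<^sub>M T) Zsp"
        unfolding T_def Ysp_def by measurable
      from measurable_comp[OF this Gm[of a b]] show ?thesis by (simp add: comp_def)
    qed
    then have Gfm: "\<And>a. (\<lambda>x::'a \<times> ('a \<times> ('a \<times> 'z)). G a (fst (snd x)) (snd (snd (snd x)))) \<in> borel_measurable (count_space UNIV \<Otimes>\<^sub>M T)"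
    proof -
      fix a
      have fs: "(\<lambda>x::'a \<times> ('a \<times> ('a \<times> 'z)). fst (snd x)) \<in> measurable (count_space UNIV \<Otimes>\<^sub>M T) (count_space UNIV)"
        unfolding T_def by measurable
      show "(\<lambda>x::'a \<times> ('a \<times> ('a \<times> 'z)). G a (fst (snd x)) (snd (snd (snd x)))) \<in> borel_measurable (count_space UNIV \<Otimes>\<^sub>M T)"
        by (rule measurable_compose_countable[OF _ fs]) (rule Gsm)
    qed
    have f1: "(fst :: 'a \<times> ('a \<times> ('a \<times> 'z)) \<Rightarrow> 'a) \<in> measurable (count_space UNIV \<Otimes>\<^sub>M T) (count_space UNIV)"
      by measurable
    show ?thesis unfolding g_def
      by (rule measurable_compose_countable[where f="\<lambda>a x. G a (fst (snd x)) (snd (snd (snd x)))", OF Gfm f1])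
  qed
  have gb: "\<bar>g x\<bar> \<le> 2 * Lb + Lb\<^sup>2 / 8" for x unfolding g_def by (rule Gb)
  have S2: "(\<integral>x. g x \<partial>Pm) = T2"
  proof -
    have "(\<integral>x. g x \<partial>Pm) = expectation (\<lambda>\<omega>. g (Astar \<omega>, W \<omega>))"
      unfolding Pm_def by (rule integral_distr) measurable
    also have "\<dots> = expectation (\<lambda>\<omega>. \<Sum>b\<in>UNIV. indicator {b} (At \<omega>) * H b \<omega>)"
      by (simp add: sum_ind[where f="\<lambda>b. H b _"] g_def W_def H_def Yeq)
    also have "\<dots> = (\<Sum>b\<in>UNIV. expectation (\<lambda>\<omega>. indicator {b} (At \<omega>) * H b \<omega>))"
      by (rule Bochner_Integration.integral_sum) (rule intb[of _ "2 * Lb + Lb\<^sup>2 / 8"];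
          use F2M[OF HF2] Hb Bnn in \<open>auto simp: indicator_def\<close>)
    also have "\<dots> = (\<Sum>b\<in>UNIV. p b * expectation (H b))"
      by (intro sum.cong refl IND[OF HF2 Hb])
    also have "\<dots> = T2"
    proof -
      have EH: "expectation (H b) = (\<Sum>a\<in>UNIV. if (a, b) \<in> E then l b * D a - (l b)\<^sup>2 * p a / 8 else 0)" for b
      proof -
        have "expectation (H b) = expectation (\<lambda>\<omega>. \<Sum>a\<in>UNIV. indicator {a} (Astar \<omega>) * G a b (Z (cls b) \<omega>))"
          by (simp add: sum_ind[where f="\<lambda>a. G a b _"] H_def)
        also have "\<dots> = (\<Sum>a\<in>UNIV. expectation (\<lambda>\<omega>. indicator {a} (Astar \<omega>) * G a b (Z (cls b) \<omega>)))"
        proof (rule Bochner_Integration.integral_sum)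
          fix a
          have "(\<lambda>\<omega>. G a b (Z (cls b) \<omega>)) \<in> borel_measurable M" by measurable
          then show "integrable M (\<lambda>\<omega>. indicator {a} (Astar \<omega>) * G a b (Z (cls b) \<omega>))"
            by (intro intb[of _ "2 * Lb + Lb\<^sup>2 / 8"]) (measurable, use Gb Bnn in \<open>auto simp: indicator_def\<close>)
        qed
        also have "\<dots> = (\<Sum>a\<in>UNIV. if (a, b) \<in> E then l b * D a - (l b)\<^sup>2 * p a / 8 else 0)"
        proof (intro sum.cong refl)
          fix a
          show "expectation (\<lambda>\<omega>. indicator {a} (Astar \<omega>) * G a b (Z (cls b) \<omega>)) =
              (if (a, b) \<in> E then l b * D a - (l b)\<^sup>2 * p a / 8 else 0)"
          proof (cases "(a, b) \<in> E")
            case True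
            have cab: "cls b = cls a" using cls_eq[OF True] by simp
            have "(\<lambda>\<omega>. indicator {a} (Astar \<omega>) * G a b (Z (cls b) \<omega>)) =
                (\<lambda>\<omega>. l b * (indicator {a} (Astar \<omega>) * R (Y a \<omega>)) - (l b * m a + (l b)\<^sup>2 / 8) * indicator {a} (Astar \<omega>))"
              using True by (auto simp: G_def cab Yeq algebra_simps fun_eq_iff)
            then have "expectation (\<lambda>\<omega>. indicator {a} (Astar \<omega>) * G a b (Z (cls b) \<omega>)) =
                l b * expectation (\<lambda>\<omega>. indicator {a} (Astar \<omega>) * R (Y a \<omega>)) - (l b * m a + (l b)\<^sup>2 / 8) * p a"
              unfolding p_def
              by (simp add: Bochner_Integration.integral_diff intb[OF indRm[OF Astar_M] indRb] intb[of _ 1])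
            then show ?thesis using True unfolding D_def by (simp add: algebra_simps)
          next
            case False
            then show ?thesis by (simp add: G_def)
          qed
        qed
        finally show ?thesis .
      qed
      show ?thesis unfolding T2_def EH
        by (simp add: sum_distrib_left if_distrib cong: if_cong)
    qed
    finally show ?thesis .
  qed
  have DVb: "MI \<ge> T2" if pos: "0 < MI"
  proof -
    let ?A = "distr M (count_space UNIV) Astar"
    let ?W = "distr M T W"
    interpret PA: prob_space ?A by (rule prob_space_distr) (rule Astar_M)
    interpret PW: prob_space ?W by (rule prob_space_distr) (rule Wm)
    interpret PP: pair_prob_space ?A ?W by unfold_locales
    have Qp: "prob_space Qm" unfolding Qm_def by (rule PP.prob_space_axioms)
    have PAWm: "(\<lambda>\<omega>. (Astar \<omega>, W \<omega>)) \<in> measurable M (count_space UNIV \<Otimes>\<^sub>M T)"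
      by (intro measurable_Pair Astar_M Wm)
    have Pp: "prob_space Pm" unfolding Pm_def by (rule prob_space_distr[OF PAWm])
    have setsQ: "sets Qm = sets (count_space UNIV \<Otimes>\<^sub>M T)"
      unfolding Qm_def by (rule sets_pair_measure_cong) auto
    have setsP: "sets Pm = sets Qm" unfolding setsQ Pm_def by simp
    have gmQ: "g \<in> borel_measurable Qm"
      by (subst measurable_cong_sets[OF setsQ refl]) (rule gm)
    have ac: "absolutely_continuous Qm Pm"
      unfolding absolutely_continuous_def
    proof (rule subsetI)
      fix S assume S: "S \<in> null_sets Qm"
      have Ssets: "S \<in> sets (count_space UNIV \<Otimes>\<^sub>M T)" using S setsQ by (auto dest: null_setsD2)
      have SsetsAW: "S \<in> sets (?A \<Otimes>\<^sub>M ?W)" using Ssets setsQ unfolding Qm_def by simp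
      have S0: "emeasure Qm S = 0" using S by (auto dest: null_setsD1)
      have fm: "(\<lambda>a. emeasure ?W (Pair a -` S)) \<in> borel_measurable (count_space UNIV)" by simp
      have fmA: "(\<lambda>\<omega>. emeasure ?W (Pair (Astar \<omega>) -` S)) \<in> borel_measurable M"
        using measurable_comp[OF Astar_M fm] by (simp add: comp_def)
      have "emeasure Qm S = (\<integral>\<^sup>+ a. emeasure ?W (Pair a -` S) \<partial>?A)"
        unfolding Qm_def by (rule PW.emeasure_pair_measure_alt[OF SsetsAW])
      also have "\<dots> = (\<integral>\<^sup>+ \<omega>. emeasure ?W (Pair (Astar \<omega>) -` S) \<partial>M)"
        by (rule nn_integral_distr[OF Astar_M]) simp
      finally have "(\<integral>\<^sup>+ \<omega>. emeasure ?W (Pair (Astar \<omega>) -` S) \<partial>M) = 0" using S0 by simp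
      then have AE1: "AE \<omega> in M. Astar \<omega> \<in> {a. emeasure ?W (Pair a -` S) = 0}"
        using nn_integral_0_iff_AE[OF fmA] by simp
      have AE2: "AE \<omega> in M. (a, W \<omega>) \<notin> S" if a: "a \<in> {a. emeasure ?W (Pair a -` S) = 0}" for a
      proof -
        have PS: "Pair a -` S \<in> sets T" using Ssets by (rule sets_Pair1)
        have e0: "emeasure M (W -` (Pair a -` S) \<inter> space M) = 0"
          using a emeasure_distr[OF Wm PS] by simp
        have ms: "W -` (Pair a -` S) \<inter> space M \<in> sets M" using Wm PS by (rule measurable_sets)
        have eqs: "{\<omega>\<in>space M. \<not> (a, W \<omega>) \<notin> S} = W -` (Pair a -` S) \<inter> space M" by auto
        show ?thesis using AE_iff_measurable[OF ms eqs] e0 by simp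
      qed
      have AE3: "AE \<omega> in M. \<forall>a\<in>{a. emeasure ?W (Pair a -` S) = 0}. (a, W \<omega>) \<notin> S"
        by (rule eventually_ball_finite) (use AE2 in auto)
      have AE4: "AE \<omega> in M. (Astar \<omega>, W \<omega>) \<notin> S"
        using AE1 AE3 by eventually_elim auto
      have PSm: "(\<lambda>\<omega>. (Astar \<omega>, W \<omega>)) -` S \<inter> space M \<in> sets M" using PAWm Ssets by (rule measurable_sets)
      have "emeasure M ((\<lambda>\<omega>. (Astar \<omega>, W \<omega>)) -` S \<inter> space M) = 0"
        using AE4 AE_iff_measurable[OF PSm, of "\<lambda>\<omega>. (Astar \<omega>, W \<omega>) \<notin> S"] by auto
      then have "emeasure Pm S = 0" unfolding Pm_def by (simp add: emeasure_distr[OF PAWm Ssets])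
      moreover have "S \<in> sets Pm" unfolding Pm_def using Ssets by simp
      ultimately show "S \<in> null_sets Pm" by (simp add: null_sets_def)
    qed
    have S3: "(\<integral>x. exp (g x) \<partial>Qm) \<le> 1"
    proof -
      define F where "F = (\<lambda>a. \<integral>w. exp (g (a, w)) \<partial>?W)"
      have egm: "(\<lambda>x. exp (g x)) \<in> borel_measurable (count_space UNIV \<Otimes>\<^sub>M T)"
        using gm by measurable
      have egb: "\<bar>exp (g x)\<bar> \<le> exp (2 * Lb + Lb\<^sup>2 / 8)" for x using gb[of x] by simp
      have intQ: "integrable (?A \<Otimes>\<^sub>M ?W) (\<lambda>x. exp (g x))"
      proof (rule PP.integrable_const_bound[where B="exp (2 * Lb + Lb\<^sup>2 / 8)"])
        show "AE x in ?A \<Otimes>\<^sub>M ?W. norm (exp (g x)) \<le> exp (2 * Lb + Lb\<^sup>2 / 8)"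
          using egb by auto
        show "(\<lambda>x. exp (g x)) \<in> borel_measurable (?A \<Otimes>\<^sub>M ?W)"
        proof -
          have "sets (?A \<Otimes>\<^sub>M ?W) = sets (count_space UNIV \<Otimes>\<^sub>M T)"
            by (rule sets_pair_measure_cong) auto
          then show ?thesis by (subst measurable_cong_sets[OF _ refl]) (auto intro: egm)
        qed
      qed
      have eq1: "(\<integral>x. exp (g x) \<partial>Qm) = (\<integral>a. F a \<partial>?A)"
        unfolding Qm_def F_def using PP.integral_fst'[OF intQ] by simp
      have eGb: "\<bar>exp (G a b z)\<bar> \<le> exp (2 * Lb + Lb\<^sup>2 / 8)" for a b z using Gb[of a b z] by simp
      have Fle: "F a \<le> 1" for a
      proof -
        have Pm1: "Pair a \<in> measurable T (count_space UNIV \<Otimes>\<^sub>M T)"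
          by (rule measurable_Pair1') simp
        have ega: "(\<lambda>w. exp (g (a, w))) \<in> borel_measurable T"
          using measurable_comp[OF Pm1 egm] by (simp add: comp_def)
        have "F a = expectation (\<lambda>\<omega>. exp (g (a, W \<omega>)))"
          unfolding F_def by (rule integral_distr[OF Wm ega])
        also have "\<dots> = expectation (\<lambda>\<omega>. \<Sum>b\<in>UNIV. indicator {b} (At \<omega>) * exp (G a b (Z (cls b) \<omega>)))"
          by (simp add: sum_ind[where f="\<lambda>b. exp (G a b (Z (cls b) _))"] g_def W_def Yeq)
        also have "\<dots> = (\<Sum>b\<in>UNIV. expectation (\<lambda>\<omega>. indicator {b} (At \<omega>) * exp (G a b (Z (cls b) \<omega>))))"
        proof (rule Bochner_Integration.integral_sum)
          fix b
          have "(\<lambda>\<omega>. exp (G a b (Z (cls b) \<omega>))) \<in> borel_measurable M" by measurable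
          then show "integrable M (\<lambda>\<omega>. indicator {b} (At \<omega>) * exp (G a b (Z (cls b) \<omega>)))"
            by (intro intb[of _ "exp (2 * Lb + Lb\<^sup>2 / 8)"]) (measurable, use eGb in \<open>auto simp: indicator_def\<close>)
        qed
        also have "\<dots> = (\<Sum>b\<in>UNIV. p b * expectation (\<lambda>\<omega>. exp (G a b (Z (cls b) \<omega>))))"
        proof (intro sum.cong refl)
          fix b
          have m2: "(\<lambda>\<omega>. exp (G a b (Z (cls b) \<omega>))) \<in> borel_measurable F2" by measurable
          show "expectation (\<lambda>\<omega>. indicator {b} (At \<omega>) * exp (G a b (Z (cls b) \<omega>))) = p b * expectation (\<lambda>\<omega>. exp (G a b (Z (cls b) \<omega>)))"
            by (rule IND[OF m2, of "exp (2 * Lb + Lb\<^sup>2 / 8)"]) (use eGb in simp)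
        qed
        also have "\<dots> \<le> (\<Sum>b\<in>UNIV. p b * 1)"
        proof (intro sum_mono mult_left_mono p_nn)
          fix b
          show "expectation (\<lambda>\<omega>. exp (G a b (Z (cls b) \<omega>))) \<le> 1"
          proof (cases "(a, b) \<in> E")
            case True
            have cab: "cls b = cls a" using cls_eq[OF True] by simp
            have "expectation (\<lambda>\<omega>. exp (G a b (Z (cls b) \<omega>))) =
                expectation (\<lambda>\<omega>. exp (l b * (R (Y a \<omega>) - expectation (\<lambda>\<omega>. R (Y a \<omega>))) - (l b)\<^sup>2 / 8))"
              using True by (simp add: G_def cab Yeq m_def)
            also have "\<dots> \<le> 1" by (rule hoeff_all[OF M RYm R_range])
            finally show ?thesis .
          next
            case False
            then show ?thesis by (simp add: G_def prob_space)
          qed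
        qed
        also have "\<dots> = 1" using psum by simp
        finally show ?thesis .
      qed
      have Fnn: "0 \<le> F a" for a unfolding F_def by simp
      have "(\<integral>a. F a \<partial>?A) \<le> (\<integral>a. 1 \<partial>?A)"
      proof (rule integral_mono)
        have Fm: "F \<in> borel_measurable ?A"
          by (subst measurable_cong_sets[of ?A "count_space UNIV"]) auto
        show "integrable ?A F"
          by (rule PA.integrable_const_bound[where B=1]) (use Fm Fle Fnn in auto)
        show "integrable ?A (\<lambda>a. 1::real)" by simp
      qed (use Fle in auto)
      also have "\<dots> = 1" using PA.prob_space by simp
      finally show ?thesis using eq1 by simp
    qed
    have "(\<integral>x. g x \<partial>Pm) \<le> MI"
      unfolding MI_def by (rule DV_bound[OF Qp Pp ac setsP gmQ gb S3 pos[unfolded MI_def]])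
    then show ?thesis using S2 by simp
  qed
  show ?thesis
  proof (cases "0 < MI")
    case False
    then have "\<Delta>\<^sup>2 / MI \<le> 0" by (intro divide_nonneg_nonpos) auto
    also have "0 \<le> real (card (UNIV // E)) / 2" by simp
    finally show ?thesis unfolding ratio .
  next
    case True
    have "2 * \<Delta>\<^sup>2 / N = \<mu> * \<Delta> - N * \<mu>\<^sup>2 / 8"
      unfolding \<mu>_def using Npos by (simp add: field_simps power2_eq_square)
    also have "\<dots> \<le> MI" using S5 DVb[OF True] by simp
    finally have "2 * \<Delta>\<^sup>2 / N \<le> MI" .
    then have "\<Delta>\<^sup>2 \<le> MI * (N / 2)" using Npos by (simp add: field_simps)
    then have "\<Delta>\<^sup>2 / MI \<le> N / 2" using True by (simp add: divide_le_eq mult.commute)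
    then show ?thesis unfolding ratio N_def .
  qed
qed
end
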